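(* Let $\mathbf{S} = [s_{ij}] \in \mathbb{R}^{m_q \times m}$ be the similarity matrix between a query vector set $\mathbf{Q}=\{\mathbf{q}_1,\dots,\mathbf{q}_{m_q}\}$ and a target vector set $\mathbf{T}=\{\mathbf{t}_1,\dots,\mathbf{t}_m\}$, with entries $s_{ij}\in[0,1]$, and let $s_{\max} = \max_{i,j} s_{ij}$. Let $\hat{\mathbf{S}} = [\hat S_{ij}]$ be the estimated similarity matrix obtained from $L \in \mathbb{Z}^+$ hash functions of a locality-sensitive hashing family (so that each estimated entry $\hat S_{ij}$ is distributed as $L^{-1}\mathcal{B}(s_{ij}, L)$, i.e. $L\hat S_{ij}$ is binomial with $L$ trials and success probability $s_{ij}$). Let $\tau_1 \in (s_{\max}, 1)$ and $\Delta_1 = \tau_1 - s_{\max}$. Then $$\Pr\big[\sigma(\hat{\mathbf{S}}) \geq s_{\max} + \Delta_1\big] \leq m_q m\, \gamma^L, \qquad \text{where } \gamma = \left(\frac{s_{\max}(1-\tau_1)}{\tau_1(1-s_{\max})}\right)^{\tau_1}\left(\frac{1-s_{\max}}{1-\tau_1}\right),$$ and $\sigma(\mathbf{A}) = \min\big(\min_i \max_j a_{ij}, \min_j \max_i a_{ij}\big)$ for a matrix $\mathbf{A}=[a_{ij}] \in \mathbb{R}^{m_q\times m}$.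
   Context: A locality-sensitive hash function $h$ satisfies $\Pr(h(\mathbf{a})=h(\mathbf{b})) = \operatorname{sim}(\mathbf{a},\mathbf{b}) \in [0,1]$. With $L$ such hash functions, the estimated similarity of a pair of vectors is the fraction of the $L$ hash functions on which they collide, hence a scaled binomial $L^{-1}\mathcal{B}(\operatorname{sim}, L)$. Vectors are $L2$-normalized and $\operatorname{sim}(\mathbf{q},\mathbf{v}) = \mathbf{q}^T\mathbf{v}$. *)

theory Defs
  imports "HOL-Probability.Probability"
begin

text \<open>Matrices of size mq x m are represented as functions nat => nat => real,
  with row index i < mq and column index j < m.\<close>

definition mat_max :: "nat \<Rightarrow> nat \<Rightarrow> (nat \<Rightarrow> nat \<Rightarrow> real) \<Rightarrow> real" where
  "mat_max mq m A = Max {A i j | i j. i < mq \<and> j < m}"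

definition sigma_mat :: "nat \<Rightarrow> nat \<Rightarrow> (nat \<Rightarrow> nat \<Rightarrow> real) \<Rightarrow> real" where
  "sigma_mat mq m A =
     min (Min ((\<lambda>i. Max ((\<lambda>j. A i j) ` {..<m})) ` {..<mq}))
         (Min ((\<lambda>j. Max ((\<lambda>i. A i j) ` {..<mq})) ` {..<m}))"

end

theory Submission imports Defs begin
lemma chernoff_binom:
  fixes p lam a :: real and L :: nat
  assumes p: "p \<in> {0..1}" and lam: "lam \<ge> 1"
  shows "measure_pmf.prob (binomial_pmf L p) {k. a \<le> real k} \<le> (1 - p + p * lam) ^ L / lam powr a"
proof -
  let ?P = "binomial_pmf L p"
  let ?A = "{k. a \<le> real k}"
  have sub: "set_pmf ?P \<subseteq> {..L}" using p by (auto simp: set_pmf_binomial_eq)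
  have "measure_pmf.prob ?P ?A = measure_pmf.prob ?P (?A \<inter> set_pmf ?P)"
    by (simp add: measure_Int_set_pmf)
  also have "?A \<inter> set_pmf ?P = (?A \<inter> {..L}) \<inter> set_pmf ?P" using sub by auto
  also have "measure_pmf.prob ?P \<dots> = measure_pmf.prob ?P (?A \<inter> {..L})"
    by (rule measure_Int_set_pmf)
  also have "\<dots> = (\<Sum>k\<in>?A \<inter> {..L}. pmf ?P k)"
    by (rule measure_measure_pmf_finite) auto
  also have "\<dots> \<le> (\<Sum>k\<in>?A \<inter> {..L}. pmf ?P k * lam powr (real k - a))"
  proof (rule sum_mono)
    fix k assume "k \<in> ?A \<inter> {..L}"
    then have "1 \<le> lam powr (real k - a)" using lam by (intro ge_one_powr_ge_zero) auto
    then show "pmf ?P k \<le> pmf ?P k * lam powr (real k - a)"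
      using pmf_nonneg[of ?P k] by (simp add: mult_le_cancel_left1)
  qed
  also have "\<dots> \<le> (\<Sum>k\<in>{..L}. pmf ?P k * lam powr (real k - a))"
    by (rule sum_mono2) auto
  also have "\<dots> = (\<Sum>k\<in>{..L}. (L choose k) * (p * lam) ^ k * (1 - p) ^ (L - k)) / lam powr a"
    unfolding sum_divide_distrib
  proof (rule sum.cong[OF refl])
    fix k
    have "lam powr (real k - a) = lam ^ k / lam powr a"
      using lam by (simp add: powr_diff powr_realpow)
    then show "pmf ?P k * lam powr (real k - a) = (L choose k) * (p * lam) ^ k * (1 - p) ^ (L - k) / lam powr a"
      using p by (simp add: power_mult_distrib)
  qed
  also have "(\<Sum>k\<in>{..L}. (L choose k) * (p * lam) ^ k * (1 - p) ^ (L - k)) = (p * lam + (1 - p)) ^ L"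
    by (simp add: binomial_ring)
  finally show ?thesis by (simp add: add.commute)
qed

theorem lemma2:
  fixes M :: "'a measure"
    and mq m L :: nat
    and s :: "nat \<Rightarrow> nat \<Rightarrow> real"
    and Shat :: "nat \<Rightarrow> nat \<Rightarrow> 'a \<Rightarrow> real"
    and \<tau>1 \<Delta>1 :: real
  assumes "prob_space M"
    and "mq \<ge> 1" and "m \<ge> 1" and "L \<ge> 1"
    and s_range: "\<And>i j. i < mq \<Longrightarrow> j < m \<Longrightarrow> s i j \<in> {0..1}"
    and meas: "\<And>i j. i < mq \<Longrightarrow> j < m \<Longrightarrow> Shat i j \<in> borel_measurable M"
    and distr: "\<And>i j. i < mq \<Longrightarrow> j < m \<Longrightarrow>
        distr M borel (\<lambda>\<omega>. real L * Shat i j \<omega>)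
        = distr (measure_pmf (binomial_pmf L (s i j))) borel real"
    and tau: "mat_max mq m s < \<tau>1" "\<tau>1 < 1"
    and Delta: "\<Delta>1 = \<tau>1 - mat_max mq m s"
  shows "measure M {\<omega> \<in> space M. sigma_mat mq m (\<lambda>i j. Shat i j \<omega>) \<ge> mat_max mq m s + \<Delta>1}
      \<le> real mq * real m *
         ((mat_max mq m s * (1 - \<tau>1) / (\<tau>1 * (1 - mat_max mq m s))) powr \<tau>1
          * ((1 - mat_max mq m s) / (1 - \<tau>1))) ^ L"
proof -
  interpret P: prob_space M by fact
  define smax where "smax = mat_max mq m s"
  define t where "t = \<tau>1"
  define g where "g = (smax * (1 - t) / (t * (1 - smax))) powr t * ((1 - smax) / (1 - t))"
  have fin: "finite {s i j | i j. i < mq \<and> j < m}"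
  proof -
    have "{s i j | i j. i < mq \<and> j < m} = (\<lambda>(i,j). s i j) ` ({..<mq} \<times> {..<m})" by auto
    then show ?thesis by simp
  qed
  have sle: "s i j \<le> smax" if "i < mq" "j < m" for i j
    unfolding smax_def mat_max_def using that fin by (intro Max_ge) auto
  have s0: "0 \<le> smax" using sle[of 0 0] s_range[of 0 0] assms(2,3) by auto
  have st: "smax < t" "t < 1" using tau by (auto simp: smax_def t_def)
  have g0: "0 \<le> g" unfolding g_def using s0 st by (intro mult_nonneg_nonneg) auto
  have thr: "mat_max mq m s + \<Delta>1 = t" using Delta by (simp add: t_def)
  have Lpos: "real L > 0" using assms(4) by simp
  have prob_eq: "measure M {\<omega>\<in>space M. t \<le> Shat i j \<omega>}
      = measure_pmf.prob (binomial_pmf L (s i j)) {k. real L * t \<le> real k}"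
    if ij: "i < mq" "j < m" for i j
  proof -
    have mf: "(\<lambda>\<omega>. real L * Shat i j \<omega>) \<in> borel_measurable M" using meas[OF ij] by measurable
    have "{\<omega>\<in>space M. t \<le> Shat i j \<omega>} = (\<lambda>\<omega>. real L * Shat i j \<omega>) -` {x. real L * t \<le> x} \<inter> space M"
      using Lpos by auto
    also have "measure M \<dots> = measure (distr M borel (\<lambda>\<omega>. real L * Shat i j \<omega>)) {x. real L * t \<le> x}"
      by (rule measure_distr[symmetric]) (use mf in auto)
    also have "\<dots> = measure (distr (measure_pmf (binomial_pmf L (s i j))) borel real) {x. real L * t \<le> x}"
      using distr[OF ij] by simp
    also have "\<dots> = measure_pmf.prob (binomial_pmf L (s i j)) (real -` {x. real L * t \<le> x} \<inter> UNIV)"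
      by (subst measure_distr) auto
    finally show ?thesis by simp
  qed
  have each: "measure_pmf.prob (binomial_pmf L p) {k. real L * t \<le> real k} \<le> g ^ L"
    if p: "p \<in> {0..1}" "p \<le> smax" for p
  proof (cases "smax = 0")
    case True
    then have "p = 0" using p by auto
    then have "measure_pmf.prob (binomial_pmf L p) {k. real L * t \<le> real k}
        = measure_pmf.prob (binomial_pmf L p) ({k. real L * t \<le> real k} \<inter> set_pmf (binomial_pmf L p))"
      by (simp only: measure_Int_set_pmf)
    also have "{k. real L * t \<le> real k} \<inter> set_pmf (binomial_pmf L p) = {}"
      using \<open>p = 0\<close> Lpos st s0 by (auto simp: mult_le_0_iff)
    finally show ?thesis using g0 by simp
  next
    case False
    then have sp: "smax > 0" using s0 by simp
    define lam where "lam = t * (1 - smax) / (smax * (1 - t))"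
    have lam1: "lam \<ge> 1" unfolding lam_def using sp st
      by (simp add: field_simps mult_mono)
    have "measure_pmf.prob (binomial_pmf L p) {k. real L * t \<le> real k}
        \<le> (1 - p + p * lam) ^ L / lam powr (real L * t)"
      by (rule chernoff_binom[OF p(1) lam1])
    also have "\<dots> \<le> (1 - smax + smax * lam) ^ L / lam powr (real L * t)"
    proof (rule divide_right_mono)
      have "1 - p + p * lam = 1 + p * (lam - 1)" by algebra
      also have "\<dots> \<le> 1 + smax * (lam - 1)" using p lam1 by (intro add_left_mono mult_right_mono) auto
      finally have "1 - p + p * lam \<le> 1 - smax + smax * lam" by (simp add: algebra_simps)
      moreover have "0 \<le> 1 - p + p * lam" using p lam1
        by (smt (verit, ccfv_SIG) atLeastAtMost_iff mult_le_cancel_left1)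
      ultimately show "(1 - p + p * lam) ^ L \<le> (1 - smax + smax * lam) ^ L"
        by (intro power_mono) auto
    qed simp
    also have "1 - smax + smax * lam = (1 - smax) / (1 - t)"
      unfolding lam_def using sp st by (simp add: field_simps)
    also have "lam powr (real L * t) = (lam powr t) ^ L"
      using lam1 by (simp add: powr_powr[symmetric] powr_realpow mult.commute)
    also have "((1 - smax) / (1 - t)) ^ L / (lam powr t) ^ L = ((1 - smax) / (1 - t) / lam powr t) ^ L"
      by (simp only: power_divide)
    also have "(1 - smax) / (1 - t) / lam powr t = g"
    proof -
      have "1 / lam powr t = (smax * (1 - t) / (t * (1 - smax))) powr t"
        unfolding lam_def using sp st by (simp add: powr_divide)
      moreover have "(1 - smax) / (1 - t) / lam powr t = (1 / lam powr t) * ((1 - smax) / (1 - t))"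
        by simp
      ultimately show ?thesis unfolding g_def by simp
    qed
    finally show ?thesis .
  qed
  have "{\<omega> \<in> space M. sigma_mat mq m (\<lambda>i j. Shat i j \<omega>) \<ge> mat_max mq m s + \<Delta>1}
      \<subseteq> (\<Union>j\<in>{..<m}. {\<omega>\<in>space M. t \<le> Shat 0 j \<omega>})"
  proof
    fix \<omega> assume "\<omega> \<in> {\<omega> \<in> space M. sigma_mat mq m (\<lambda>i j. Shat i j \<omega>) \<ge> mat_max mq m s + \<Delta>1}"
    then have w: "\<omega> \<in> space M" and sg: "t \<le> sigma_mat mq m (\<lambda>i j. Shat i j \<omega>)" using thr by auto
    have "t \<le> Min ((\<lambda>i. Max ((\<lambda>j. Shat i j \<omega>) ` {..<m})) ` {..<mq})"
      using sg unfolding sigma_mat_def by simp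
    also have "\<dots> \<le> Max ((\<lambda>j. Shat 0 j \<omega>) ` {..<m})"
      using assms(2) by (intro Min_le) auto
    finally have "\<exists>j<m. t \<le> Shat 0 j \<omega>"
      using assms(3) by (subst (asm) Max_ge_iff) (auto simp: lessThan_empty_iff)
    then show "\<omega> \<in> (\<Union>j\<in>{..<m}. {\<omega>\<in>space M. t \<le> Shat 0 j \<omega>})" using w by auto
  qed
  then have "measure M {\<omega> \<in> space M. sigma_mat mq m (\<lambda>i j. Shat i j \<omega>) \<ge> mat_max mq m s + \<Delta>1}
      \<le> measure M (\<Union>j\<in>{..<m}. {\<omega>\<in>space M. t \<le> Shat 0 j \<omega>})"
    using assms(2) meas by (intro P.finite_measure_mono) (auto intro!: sets.finite_UN)
  also have "\<dots> \<le> (\<Sum>j<m. measure M {\<omega>\<in>space M. t \<le> Shat 0 j \<omega>})"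
    using assms(2) meas by (intro P.finite_measure_subadditive_finite) auto
  also have "\<dots> \<le> (\<Sum>j<m. g ^ L)"
  proof (rule sum_mono)
    fix j assume "j \<in> {..<m}"
    then have j: "j < m" by simp
    have i0: "0 < mq" using assms(2) by simp
    show "measure M {\<omega>\<in>space M. t \<le> Shat 0 j \<omega>} \<le> g ^ L"
      using prob_eq[OF i0 j] each[OF s_range[OF i0 j] sle[OF i0 j]] by simp
  qed
  also have "\<dots> = real m * g ^ L" by simp
  also have "\<dots> \<le> real mq * real m * g ^ L"
  proof -
    have a: "0 \<le> real m * g ^ L" using g0 by simp
    have b: "1 \<le> real mq" using assms(2) by simp
    have "real m * g ^ L \<le> real mq * (real m * g ^ L)"
      using mult_right_mono[OF b a] by simp
    then show ?thesis by (simp add: mult.assoc)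
  qed
  finally show ?thesis unfolding g_def smax_def t_def .
qed
end
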